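(* Let $G$ be a graph of order $p$ with $1\le\delta(G)\le p-2$. If $G$ has a $\delta$-sequence $\{\mathcal G_i\}_{i=1}^s$ such that $\tilde z_i(G)=\sum_{j=2}^i\tilde y_j(G)\ge 0$ for all $2\le i\le s$, then $str(G)=p+\delta(G)$.
   Context: All graphs are finite, simple and loopless. For a graph $G$ of order $p$, a numbering of $G$ is a bijection $f:V(G)\to[1,p]$, where $[a,b]$ denotes the set of integers from $a$ to $b$. The strength of a numbering $f$ is $str_f(G)=\max\{f(u)+f(v): uv\in E(G)\}$, and the strength of a graph $G$ with at least one edge is $str(G)=\min\{str_f(G): f \text{ a numbering of } G\}$. $\delta(G)$ denotes the minimum degree. $G+H$ denotes disjoint union, $mK_1$ the edgeless graph on $m$ vertices, $K_r$ the complete graph. $\delta$-sequence: Let $G$ have order $p$ with $1\le\delta(G)\le p-2$. Set $\mathcal G_1=G_1=G$, $m_1=0$. For each $i$, write $\mathcal G_i=m_iK_1+G_i$, where $m_i\ge0$ is the number of isolated vertices of $\mathcal G_i$ and $G_i$ has no isolated vertices; put $\delta_i=\delta(G_i)$. If $\mathcal G_i$ is neither of the form $mK_1$ ($m\ge1$) nor $mK_1+K_r$ ($m\ge0$, $r\ge2$), choose a vertex $u_i$ of $G_i$ with $\deg_{G_i}(u_i)=\delta_i$ and let $\mathcal G_{i+1}$ be obtained from $G_i$ by deleting $u_i$ together with all its neighbours in $G_i$ (equivalently, from $\mathcal G_i$ by deleting its $m_i$ isolated vertices, $u_i$ and $N_{G_i}(u_i)$). Stop at the first index $s$ ($s\ge2$)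 for which $\mathcal G_s$ is $m_sK_1$ with $m_s\ge1$ (then set $\delta_s=0$) or $m_sK_1+K_r$ with $m_s\ge0$, $r\ge2$ (then $\delta_s=r-1$). The resulting $\{\mathcal G_i\}_{i=1}^s$ is a $\delta$-sequence of $G$. Define $\tilde y_j(G)=m_j+1-\delta_j$ for $1\le j\le s$ and $\tilde z_i(G)=\sum_{j=2}^i\tilde y_j(G)$. *)

theory Defs
  imports Main
begin

definition graph :: "'a set \<Rightarrow> 'a set set \<Rightarrow> bool" where
  "graph V E \<longleftrightarrow> finite V \<and> (\<forall>e\<in>E. e \<subseteq> V \<and> card e = 2)"

definition nbr :: "'a set set \<Rightarrow> 'a set \<Rightarrow> 'a \<Rightarrow> 'a set" where
  "nbr E W v = {u \<in> W. {u, v} \<in> E}"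

definition deg :: "'a set set \<Rightarrow> 'a set \<Rightarrow> 'a \<Rightarrow> nat" where
  "deg E W v = card (nbr E W v)"

definition min_deg :: "'a set set \<Rightarrow> 'a set \<Rightarrow> nat" where
  "min_deg E W = (if W = {} then 0 else Min (deg E W ` W))"

definition iso :: "'a set set \<Rightarrow> 'a set \<Rightarrow> 'a set" where
  "iso E W = {v \<in> W. deg E W v = 0}"

definition core :: "'a set set \<Rightarrow> 'a set \<Rightarrow> 'a set" where
  "core E W = W - iso E W"

definition complete_on :: "'a set set \<Rightarrow> 'a set \<Rightarrow> bool" where
  "complete_on E W \<longleftrightarrow> (\<forall>u\<in>W. \<forall>v\<in>W. u \<noteq> v \<longrightarrow> {u, v} \<in> E)"

text \<open>Terminal forms: m K_1 (m \<ge> 1) or m K_1 + K_r (r \<ge> 2).\<close>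
definition terminal :: "'a set set \<Rightarrow> 'a set \<Rightarrow> bool" where
  "terminal E W \<longleftrightarrow>
     (W \<noteq> {} \<and> core E W = {}) \<or>
     (card (core E W) \<ge> 2 \<and> complete_on E (core E W))"

text \<open>A delta-sequence, represented by the vertex sets of the induced subgraphs
  calG_1, ..., calG_s (list index j-1 corresponds to calG_j).\<close>
definition delta_seq :: "'a set \<Rightarrow> 'a set set \<Rightarrow> 'a set list \<Rightarrow> bool" where
  "delta_seq V E Ws \<longleftrightarrow>
     length Ws \<ge> 2 \<and> Ws ! 0 = V \<and>
     (\<forall>i < length Ws - 1. \<not> terminal E (Ws ! i) \<and>
        (\<exists>u \<in> core E (Ws ! i). deg E (core E (Ws ! i)) u = min_deg E (core E (Ws ! i)) \<and>
           Ws ! (i + 1) = core E (Ws ! i) - insert u (nbr E (core E (Ws ! i)) u))) \<and>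
     terminal E (Ws ! (length Ws - 1))"

text \<open>m_j and delta_j of the graph calG with vertex set W. For the terminal forms
  this gives delta = 0 (edgeless) and delta = r - 1 (K_r part), as in the paper.\<close>
definition m_of :: "'a set set \<Rightarrow> 'a set \<Rightarrow> nat" where
  "m_of E W = card (iso E W)"

definition delta_of :: "'a set set \<Rightarrow> 'a set \<Rightarrow> nat" where
  "delta_of E W = min_deg E (core E W)"

definition y_tilde :: "'a set set \<Rightarrow> 'a set list \<Rightarrow> nat \<Rightarrow> int" where
  "y_tilde E Ws j = int (m_of E (Ws ! (j - 1))) + 1 - int (delta_of E (Ws ! (j - 1)))"

definition z_tilde :: "'a set set \<Rightarrow> 'a set list \<Rightarrow> nat \<Rightarrow> int" where
  "z_tilde E Ws i = (\<Sum>j = 2..i. y_tilde E Ws j)"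

definition numbering :: "'a set \<Rightarrow> ('a \<Rightarrow> nat) \<Rightarrow> bool" where
  "numbering V f \<longleftrightarrow> bij_betw f V {1..card V}"

definition str_f :: "'a set set \<Rightarrow> ('a \<Rightarrow> nat) \<Rightarrow> nat" where
  "str_f E f = Max {f u + f v | u v. {u, v} \<in> E}"

definition strength :: "'a set \<Rightarrow> 'a set set \<Rightarrow> nat" where
  "strength V E = Min {str_f E f | f. numbering V f}"

end

theory Submission
  imports Defs
begin

definition yk :: "'a set set \<Rightarrow> 'a set list \<Rightarrow> nat \<Rightarrow> int" where
  "yk E Ws j = int (m_of E (Ws ! j)) + 1 - int (delta_of E (Ws ! j))"

lemma nbr_sub: "nbr E W v \<subseteq> W" by (auto simp: nbr_def)

lemma edge_ne: "graph V E \<Longrightarrow> {x,y} \<in> E \<Longrightarrow> x \<noteq> y"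
  unfolding graph_def by (cases "x = y") auto

lemma edge_V: "graph V E \<Longrightarrow> {x,y} \<in> E \<Longrightarrow> x \<in> V \<and> y \<in> V"
  unfolding graph_def by blast

lemma iso_no_edge:
  assumes "finite W" "x \<in> iso E W" "y \<in> W"
  shows "{x,y} \<notin> E"
proof
  assume e: "{x,y} \<in> E"
  have "y \<in> nbr E W x" using e assms(3) by (simp add: nbr_def insert_commute)
  moreover have "finite (nbr E W x)" using assms(1) nbr_sub finite_subset by metis
  moreover have "card (nbr E W x) = 0" using assms(2) by (simp add: iso_def deg_def)
  ultimately show False by auto
qed

lemma min_deg_le: "finite W \<Longrightarrow> v \<in> W \<Longrightarrow> min_deg E W \<le> deg E W v"
  unfolding min_deg_def by auto

lemma Ws_sub:
  assumes "delta_seq V E Ws" "k < length Ws"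
  shows "Ws ! k \<subseteq> V"
  using assms(2)
proof (induction k)
  case 0 then show ?case using assms(1) by (simp add: delta_seq_def)
next
  case (Suc k)
  then have "k < length Ws - 1" by simp
  then obtain u where "Ws ! (Suc k) = core E (Ws ! k) - insert u (nbr E (core E (Ws ! k)) u)"
    using assms(1) unfolding delta_seq_def by auto
  then show ?case using Suc by (auto simp: core_def)
qed

lemma two_labels:
  fixes p q M :: nat
  assumes "p \<le> M" "q \<le> M" "p \<noteq> q"
  shows "p + q + 1 \<le> 2 * M"
  using assms by linarith

lemma exbij:
  assumes "finite A" shows "\<exists>h. bij_betw h A {a+1..a + card A}"
  using finite_same_card_bij[OF assms, of "{a+1..a+card A}"] by auto

lemma build:
  assumes G: "graph V E" and ds: "delta_seq V E Ws"
  shows "k < length Ws \<Longrightarrow> (\<forall>k'\<in>{k..<length Ws}. 1 - (\<Sum>j=k..k'. yk E Ws j) \<le> D) \<Longrightarrow>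
    \<exists>g. bij_betw g (Ws!k) {a+1..a+card (Ws!k)} \<and>
      (\<forall>x\<in>Ws!k. \<forall>y\<in>Ws!k. {x,y}\<in>E \<longrightarrow> int (g x + g y) \<le> 2*int a + int (card (Ws!k)) + D)"
proof (induction "length Ws - 1 - k" arbitrary: k a D)
  case 0
  define W where "W = Ws ! k"
  have k: "k = length Ws - 1" using 0 by simp
  have hterm: "terminal E W" using ds k unfolding delta_seq_def W_def by simp
  have fW: "finite W" using Ws_sub[OF ds 0(2)] G finite_subset unfolding graph_def W_def by blast
  define I where "I = iso E W"
  define C where "C = core E W"
  have CI: "C = W - I" "I \<subseteq> W" by (auto simp: C_def I_def core_def iso_def)
  have fC: "finite C" "finite I" using fW CI finite_subset by auto
  have cardW: "card W = card C + card I" using CI fC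
    by (metis Diff_disjoint Diff_partition card_Un_disjoint inf_commute sup_commute)
  obtain hC where hC: "bij_betw hC C {a+1..a+card C}" using exbij[OF fC(1)] by blast
  obtain hI where hI: "bij_betw hI I {(a+card C)+1..(a+card C)+card I}" using exbij[OF fC(2)] by blast
  define g where "g x = (if x \<in> C then hC x else hI x)" for x
  have b1: "bij_betw g C {a+1..a+card C}" using hC by (subst bij_betw_cong[where g=hC]) (auto simp: g_def)
  have b2: "bij_betw g I {(a+card C)+1..(a+card C)+card I}" using hI CI
    by (subst bij_betw_cong[where g=hI]) (auto simp: g_def)
  have "bij_betw g (C \<union> I) ({a+1..a+card C} \<union> {(a+card C)+1..(a+card C)+card I})"
    by (rule bij_betw_combine[OF b1 b2]) auto
  moreover have "C \<union> I = W" using CI by auto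
  moreover have "{a+1..a+card C} \<union> {(a+card C)+1..(a+card C)+card I} = {a+1..a+card W}"
    using cardW by auto
  ultimately have bij: "bij_betw g W {a+1..a+card W}" by simp
  have edges: "int (g x + g y) \<le> 2*int a + int (card W) + D" if xy: "x \<in> W" "y \<in> W" "{x,y} \<in> E" for x y
  proof -
    have xC: "x \<in> C" using iso_no_edge[OF fW _ xy(2), of x E] xy CI by (auto simp: I_def)
    have yC: "y \<in> C" using iso_no_edge[OF fW _ xy(1), of y E] xy CI by (auto simp: I_def insert_commute)
    have ne: "x \<noteq> y" using edge_ne[OF G xy(3)] .
    have "C \<noteq> {}" using xC by auto
    then have cc: "card C \<ge> 2 \<and> complete_on E C" using hterm unfolding terminal_def C_def W_def by auto
    have degs: "deg E C v \<ge> card C - 1" if "v \<in> C" for v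
    proof -
      have "C - {v} \<subseteq> nbr E C v" using cc that unfolding complete_on_def nbr_def
        by (auto simp: insert_commute)
      then have "card (C - {v}) \<le> card (nbr E C v)" using fC nbr_sub[of E C v] card_mono finite_subset by metis
      then show ?thesis using that fC by (simp add: deg_def)
    qed
    have "min_deg E C \<ge> card C - 1" using degs \<open>C \<noteq> {}\<close> fC unfolding min_deg_def by auto
    moreover have "1 - yk E Ws k \<le> D" using bspec[OF 0(3), of k] 0(2) by simp
    ultimately have Dge: "int (card C) - 1 - int (card I) \<le> D"
      unfolding yk_def m_of_def delta_of_def W_def[symmetric] C_def[symmetric] I_def[symmetric] using cc by linarith
    have "g x \<in> {a+1..a+card C}" "g y \<in> {a+1..a+card C}" using b1 xC yC bij_betwE by blast+
    moreover have "g x \<noteq> g y" using b1 xC yC ne by (auto simp: bij_betw_def inj_on_def)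
    ultimately have "g x + g y + 1 \<le> 2 * (a + card C)" using two_labels by simp
    then have "int (g x + g y + 1) \<le> int (2 * (a + card C))" by (simp only: of_nat_le_iff)
    then have "int (g x) + int (g y) + 1 \<le> 2 * int a + 2 * int (card C)" by simp
    moreover have "int (card W) = int (card C) + int (card I)" using cardW by simp
    ultimately show ?thesis using Dge by simp
  qed
  show ?case using bij edges unfolding W_def by blast
next
  case (Suc d)
  define W where "W = Ws ! k"
  have k: "k < length Ws - 1" using Suc by linarith
  obtain u where u: "u \<in> core E W" "deg E (core E W) u = min_deg E (core E W)"
     "Ws ! (k + 1) = core E W - insert u (nbr E (core E W) u)"
    using ds k unfolding delta_seq_def W_def by blast
  have fW: "finite W" using Ws_sub[OF ds Suc(3)] G finite_subset unfolding graph_def W_def by blast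
  define I where "I = iso E W"
  define C where "C = core E W"
  define N where "N = nbr E C u"
  define W' where "W' = Ws ! (k+1)"
  have CI: "C = W - I" "I \<subseteq> W" by (auto simp: C_def I_def core_def iso_def)
  have fC: "finite C" "finite I" using fW CI finite_subset by auto
  have NC: "N \<subseteq> C" "u \<notin> N" using nbr_sub edge_ne[OF G, of u u] by (auto simp: N_def nbr_def)
  have W'C: "W' = C - insert u N" using u(3) by (simp add: W'_def C_def N_def)
  have fN: "finite N" "finite W'" using NC fC W'C finite_subset by auto
  have cardW: "card W = card C + card I" using CI fC
    by (metis Diff_disjoint Diff_partition card_Un_disjoint inf_commute sup_commute)
  have Cins: "C = insert u (N \<union> W')" using W'C NC u(1) by (auto simp: C_def)
  have "card (N \<union> W') = card N + card W'" using fN W'C by (intro card_Un_disjoint) auto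
  moreover have "u \<notin> N \<union> W'" using NC W'C by auto
  ultimately have cardC: "card C = card N + card W' + 1" using Cins fN by (simp only: card_insert_disjoint finite_Un) simp
  have delta: "delta_of E W = card N" using u(2) by (simp add: delta_of_def deg_def N_def C_def)
  have IH: "\<exists>g. bij_betw g (Ws!(k+1)) {(a + card N)+1..(a + card N)+card (Ws!(k+1))} \<and>
      (\<forall>x\<in>Ws!(k+1). \<forall>y\<in>Ws!(k+1). {x,y}\<in>E \<longrightarrow> int (g x + g y) \<le> 2*int (a + card N) + int (card (Ws!(k+1))) + (D + yk E Ws k))"
  proof (rule Suc(1))
    show "d = length Ws - 1 - (k + 1)" using Suc(2) by linarith
    show "k + 1 < length Ws" using k by linarith
    show "\<forall>k'\<in>{k + 1..<length Ws}. 1 - sum (yk E Ws) {k + 1..k'} \<le> D + yk E Ws k"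
    proof
      fix k' assume "k' \<in> {k + 1..<length Ws}"
      then have "k' \<in> {k..<length Ws}" "k \<le> k'" by auto
      then have "1 - sum (yk E Ws) {k..k'} \<le> D" using Suc(4) by blast
      moreover have "sum (yk E Ws) {k..k'} = yk E Ws k + sum (yk E Ws) {Suc k..k'}"
        using \<open>k \<le> k'\<close> by (rule sum.atLeast_Suc_atMost)
      ultimately show "1 - sum (yk E Ws) {k + 1..k'} \<le> D + yk E Ws k" by simp
    qed
  qed
  then obtain g' where g': "bij_betw g' W' {(a + card N)+1..(a + card N)+card W'}"
    "\<And>x y. x\<in>W' \<Longrightarrow> y\<in>W' \<Longrightarrow> {x,y}\<in>E \<Longrightarrow> int (g' x + g' y) \<le> 2*int (a + card N) + int (card W') + (D + yk E Ws k)"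
    unfolding W'_def by blast
  have D0: "1 - yk E Ws k \<le> D" using bspec[OF Suc(4), of k] Suc(3) by simp
  obtain hN where hN: "bij_betw hN N {a+1..a+card N}" using exbij[OF fN(1)] by blast
  define b where "b = a + card N + card W' + 1"
  obtain hI where hI: "bij_betw hI I {b+1..b+card I}" using exbij[OF fC(2)] by blast
  define g where "g x = (if x \<in> N then hN x else if x \<in> W' then g' x else if x = u then b else hI x)" for x
  have b1: "bij_betw g N {a+1..a+card N}" using hN by (subst bij_betw_cong[where g=hN]) (auto simp: g_def)
  have b2: "bij_betw g W' {(a + card N)+1..(a + card N)+card W'}" using g'(1) W'C
    by (subst bij_betw_cong[where g=g']) (auto simp: g_def)
  have b3: "bij_betw g {u} {b}" using NC W'C by (simp add: g_def)
  have b4: "bij_betw g I {b+1..b+card I}" using hI CI NC W'C u(1)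
    by (subst bij_betw_cong[where g=hI]) (auto simp: g_def C_def)
  have "bij_betw g ((N \<union> W') \<union> ({u} \<union> I)) (({a+1..a+card N} \<union> {(a + card N)+1..(a + card N)+card W'}) \<union> ({b} \<union> {b+1..b+card I}))"
    apply (rule bij_betw_combine)
      apply (rule bij_betw_combine[OF b1 b2]) apply force
     apply (rule bij_betw_combine[OF b3 b4]) apply force
    by (auto simp: b_def)
  moreover have "(N \<union> W') \<union> ({u} \<union> I) = W" using CI NC W'C u(1) unfolding C_def[symmetric] by auto
  moreover have "({a+1..a+card N} \<union> {(a + card N)+1..(a + card N)+card W'}) \<union> ({b} \<union> {b+1..b+card I}) = {a+1..a+card W}"
    unfolding b_def using cardW cardC by (intro set_eqI) (simp; arith)
  ultimately have bij: "bij_betw g W {a+1..a+card W}" by simp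
  have gle: "g z \<le> b" if "z \<in> C" for z
  proof -
    have "z \<in> N \<or> z \<in> W' \<or> z = u" using that W'C by auto
    then show ?thesis using b1 b2 b3 bij_betwE unfolding b_def by fastforce
  qed
  have Dge: "int (card N) - int (card I) \<le> D" using D0 delta unfolding yk_def m_of_def W_def[symmetric] I_def[symmetric] by linarith
  have nb: "int (g x + g y) \<le> 2*int a + int (card W) + D" if xy: "x \<in> N" "y \<in> C" for x y
  proof -
    have "g x \<le> a + card N" using b1 xy(1) bij_betwE by fastforce
    moreover have "g y \<le> b" using gle xy(2) .
    ultimately show ?thesis using Dge cardW cardC unfolding b_def by linarith
  qed
  have edges: "int (g x + g y) \<le> 2*int a + int (card W) + D" if xy: "x \<in> W" "y \<in> W" "{x,y} \<in> E" for x y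
  proof -
    have xC: "x \<in> C" using iso_no_edge[OF fW _ xy(2), of x E] xy CI by (auto simp: I_def)
    have yC: "y \<in> C" using iso_no_edge[OF fW _ xy(1), of y E] xy CI by (auto simp: I_def insert_commute)
    show ?thesis
    proof (cases "x \<in> N \<or> y \<in> N")
      case True
      then show ?thesis using nb xC yC by (metis add.commute)
    next
      case False
      have "x \<noteq> u" using False yC xy(3) by (auto simp: N_def nbr_def insert_commute)
      moreover have "y \<noteq> u" using False xC xy(3) by (auto simp: N_def nbr_def)
      ultimately have "x \<in> W'" "y \<in> W'" using False xC yC W'C by auto
      then have "int (g' x + g' y) \<le> 2*int (a + card N) + int (card W') + (D + yk E Ws k)" using g'(2) xy(3) by blast
      moreover have "g x = g' x" "g y = g' y" using \<open>x \<in> W'\<close> \<open>y \<in> W'\<close> False by (auto simp: g_def)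
      ultimately show ?thesis using cardW cardC delta unfolding yk_def m_of_def W_def[symmetric] I_def[symmetric] by simp
    qed
  qed
  show ?case using bij edges unfolding W_def by blast
qed

lemma sums_fin:
  assumes G: "graph V E"
  shows "finite {f u + f v | u v. {u, v} \<in> E}"
proof -
  have "{f u + f v | u v. {u, v} \<in> E} \<subseteq> (\<lambda>(u,v). f u + f v) ` (V \<times> V)"
    using edge_V[OF G] by fastforce
  moreover have "finite V" using G by (simp add: graph_def)
  ultimately show ?thesis using finite_subset by blast
qed

theorem mainTheorem2:
  fixes V :: "'a set" and E :: "'a set set" and Ws :: "'a set list"
  assumes "graph V E"
    and "1 \<le> min_deg E V" and "min_deg E V + 2 \<le> card V"
    and "delta_seq V E Ws"
    and "\<forall>i \<in> {2..length Ws}. z_tilde E Ws i \<ge> 0"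
  shows "strength V E = card V + min_deg E V"
proof -
  note G = assms(1) and ds = assms(4)
  define p where "p = card V"
  define \<delta> where "\<delta> = min_deg E V"
  have fV: "finite V" using G by (simp add: graph_def)
  have Vne: "V \<noteq> {}" using assms(3) by auto
  have degV: "deg E V v \<ge> \<delta>" if "v \<in> V" for v using min_deg_le[OF fV that] by (simp add: \<delta>_def)
  have isoV: "iso E V = {}" using degV assms(2) unfolding iso_def \<delta>_def by fastforce
  have coreV: "core E V = V" using isoV by (simp add: core_def)
  have ls: "2 \<le> length Ws" "Ws ! 0 = V" using ds by (auto simp: delta_seq_def)
  have y0: "yk E Ws 0 = 1 - int \<delta>"
    using ls isoV coreV by (simp add: yk_def m_of_def delta_of_def \<delta>_def)
  have hyp: "\<forall>k'\<in>{0..<length Ws}. 1 - (\<Sum>j=0..k'. yk E Ws j) \<le> int \<delta>"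
  proof
    fix k' assume k': "k' \<in> {0..<length Ws}"
    have "(\<Sum>j=0..k'. yk E Ws j) = yk E Ws 0 + (\<Sum>j=Suc 0..k'. yk E Ws j)"
      by (rule sum.atLeast_Suc_atMost) simp
    moreover have "(\<Sum>j=Suc 0..k'. yk E Ws j) \<ge> 0"
    proof (cases "k' = 0")
      case True then show ?thesis by simp
    next
      case False
      then have "Suc k' \<in> {2..length Ws}" using k' by auto
      then have "z_tilde E Ws (Suc k') \<ge> 0" using assms(5) by blast
      moreover have "z_tilde E Ws (Suc k') = (\<Sum>j=Suc 0..k'. yk E Ws j)"
        unfolding z_tilde_def numeral_2_eq_2 sum.shift_bounds_cl_Suc_ivl
        by (simp add: y_tilde_def yk_def)
      ultimately show ?thesis by simp
    qed
    ultimately show "1 - (\<Sum>j=0..k'. yk E Ws j) \<le> int \<delta>" using y0 by simp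
  qed
  obtain g where g: "bij_betw g V {0+1..0+p}"
    "\<And>x y. x\<in>V \<Longrightarrow> y\<in>V \<Longrightarrow> {x,y}\<in>E \<Longrightarrow> int (g x + g y) \<le> 2*int 0 + int p + int \<delta>"
  proof -
    have "0 < length Ws" using ls(1) by linarith
    from build[OF G ds this hyp, of 0] show ?thesis using that ls(2) unfolding p_def by blast
  qed
  have numg: "numbering V g" using g(1) by (simp add: numbering_def p_def)
  obtain v0 where v0: "v0 \<in> V" using Vne by auto
  have "deg E V v0 \<ge> 1" using degV[OF v0] assms(2) \<delta>_def by simp
  then have "nbr E V v0 \<noteq> {}" by (auto simp: deg_def)
  then obtain w0 where "{w0, v0} \<in> E" by (auto simp: nbr_def)
  then have Tne: "{f u + f v | u v. {u, v} \<in> E} \<noteq> {}" for f :: "'a \<Rightarrow> nat" by blast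
  have up: "str_f E g \<le> p + \<delta>"
    unfolding str_f_def
  proof (rule Max.boundedI[OF sums_fin[OF G] Tne])
    fix t assume "t \<in> {g u + g v | u v. {u, v} \<in> E}"
    then obtain x y where "t = g x + g y" "{x,y} \<in> E" by blast
    then show "t \<le> p + \<delta>" using g(2)[of x y] edge_V[OF G] by fastforce
  qed
  have low: "str_f E f \<ge> p + \<delta>" if f: "numbering V f" for f
  proof -
    have bf: "bij_betw f V {1..p}" using f by (simp add: numbering_def p_def)
    have "p \<in> {1..p}" using assms(3) p_def by simp
    then obtain v where v: "v \<in> V" "f v = p" using bf by (metis bij_betw_iff_bijections)
    define Nv where "Nv = nbr E V v"
    have fN: "finite Nv" using fV nbr_sub finite_subset unfolding Nv_def by metis
    have cN: "card Nv \<ge> \<delta>" using degV[OF v(1)] by (simp add: deg_def Nv_def)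
    have NV: "Nv \<subseteq> V" by (simp add: Nv_def nbr_sub)
    have "\<exists>w\<in>Nv. f w \<ge> \<delta>"
    proof (rule ccontr)
      assume na: "\<not> (\<exists>w\<in>Nv. f w \<ge> \<delta>)"
      have "f ` Nv \<subseteq> {1..<\<delta>}"
      proof
        fix t assume "t \<in> f ` Nv"
        then obtain w where "w \<in> Nv" "t = f w" by blast
        moreover have "f w \<in> {1..p}" using bf NV \<open>w \<in> Nv\<close> bij_betwE by blast
        ultimately show "t \<in> {1..<\<delta>}" using na by auto
      qed
      then have "card (f ` Nv) \<le> \<delta> - 1" using card_mono[of "{1..<\<delta>}"] by fastforce
      moreover have "card (f ` Nv) = card Nv" using bf NV inj_on_subset
        by (metis bij_betw_def card_image)
      ultimately show False using cN assms(2) \<delta>_def by linarith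
    qed
    then obtain w where w: "w \<in> Nv" "f w \<ge> \<delta>" by blast
    then have "{w, v} \<in> E" by (simp add: Nv_def nbr_def)
    then have "f w + f v \<in> {f u + f v | u v. {u, v} \<in> E}" by blast
    then have "f w + f v \<le> str_f E f" unfolding str_f_def using sums_fin[OF G] by (rule Max_ge[rotated])
    then show ?thesis using w v by simp
  qed
  define S where "S = {str_f E f | f. numbering V f}"
  have Sfin: "finite S"
  proof -
    have "S \<subseteq> {..2*p}"
    proof
      fix t assume "t \<in> S"
      then obtain f where f: "t = str_f E f" "numbering V f" by (auto simp: S_def)
      have "str_f E f \<le> 2 * p" unfolding str_f_def
      proof (rule Max.boundedI[OF sums_fin[OF G] Tne])
        fix t assume "t \<in> {f u + f v | u v. {u, v} \<in> E}"
        then obtain x y where "t = f x + f y" "{x,y} \<in> E" by blast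
        moreover have "f x \<le> p" "f y \<le> p" using edge_V[OF G \<open>{x,y} \<in> E\<close>] f(2)
          by (auto simp: numbering_def p_def dest: bij_betwE)
        ultimately show "t \<le> 2 * p" by simp
      qed
      then show "t \<in> {..2*p}" using f by simp
    qed
    then show ?thesis using finite_subset by blast
  qed
  have "str_f E g \<in> S" using numg by (auto simp: S_def)
  then have "Min S \<le> p + \<delta>" using up Sfin Min_le order_trans by blast
  moreover have "Min S \<ge> p + \<delta>"
  proof -
    have "S \<noteq> {}" using \<open>str_f E g \<in> S\<close> by blast
    moreover have "\<forall>t\<in>S. p + \<delta> \<le> t" using low by (auto simp: S_def)
    ultimately show ?thesis using Sfin by simp
  qed
  ultimately show ?thesis unfolding strength_def S_def[symmetric] p_def \<delta>_def by simp
qed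

end
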